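(* Let $(X,d)$ be a metric space, $m,L\in\mathbb{N}$, $a_0,\dots,a_{m-1}\ge0$ with $\sum_{i=0}^{m-1}a_i<1$, and let $\mathcal{S}=(X,(\phi_j)_{j=1}^L,(p_j)_{j=1}^L)$ be a GIFS with probabilities of order $m$ consisting of $(a_0,\dots,a_{m-1})$-contractions. Then the map $\overline{M}_\mathcal{S}:\mathcal{P}(X)\to\mathcal{P}(X)$, $\overline{M}_\mathcal{S}(\mu):=M_\mathcal{S}(\mu,\dots,\mu)$, is a Banach contraction with respect to $d_{MK}$, with Lipschitz constant $\mathrm{Lip}(\overline{M}_\mathcal{S})\le\sum_{i=0}^{m-1}a_i$.
   Context: $X^m$ carries the maximum metric. A map $f:X^m\to X$ is an $(a_0,\dots,a_{m-1})$-contraction if $d(f(x_0,\dots,x_{m-1}),f(y_0,\dots,y_{m-1}))\le\sum_{i}a_i d(x_i,y_i)$. A GIFS with probabilities of order $m$ is $(X,(\phi_j)_{j=1}^L,(p_j)_{j=1}^L)$ with continuous $\phi_j:X^m\to X$ and $p_j>0$, $\sum_j p_j=1$. $\mathcal{P}(X)$ is the set of Borel probability measures on $X$ with compact support. $w^\sharp\mu(B):=\mu(w^{-1}(B))$. $M_\mathcal{S}(\mu_0,\dots,\mu_{m-1}):=\sum_{j}p_j\phi_j^\sharp(\mu_0\times\dots\times\mu_{m-1})$. $d_{MK}(\mu,\nu)=\sup\{|\int f d\mu-\int f d\nu|: \mathrm{Lip}(f)\le1\}$. A Banach contraction is a map with Lipschitz constant $<1$. *)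

theory Defs
  imports "HOL-Probability.Probability"
begin

text \<open>Points of X^m are functions 'm => 'a for a finite index type 'm (|'m| = m).
  The max metric on X^m induces the product topology, which is the standard
  topology on the function type.\<close>

definition is_contraction_m :: "('m::finite \<Rightarrow> real) \<Rightarrow> (('m \<Rightarrow> 'a::metric_space) \<Rightarrow> 'a) \<Rightarrow> bool" where
  "is_contraction_m a f \<longleftrightarrow>
     (\<forall>x y. dist (f x) (f y) \<le> (\<Sum>i\<in>UNIV. a i * dist (x i) (y i)))"

definition Pc :: "'a::metric_space measure set" where
  "Pc = {\<mu>. sets \<mu> = sets borel \<and> prob_space \<mu> \<and>
             (\<exists>K. compact K \<and> emeasure \<mu> K = 1)}"

definition csupp :: "'a::metric_space measure \<Rightarrow> 'a set" where
  "csupp \<mu> = (SOME K. compact K \<and> emeasure \<mu> K = 1)"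

text \<open>The product measure mu x ... x mu on X^m (concentrated on K^m, K compact,
  so that continuous maps are measurable also for non-separable X).\<close>
definition prodM :: "'a::metric_space measure \<Rightarrow> ('m::finite \<Rightarrow> 'a) measure" where
  "prodM \<mu> = PiM UNIV (\<lambda>_. restrict_space \<mu> (csupp \<mu>))"

text \<open>M_S(mu,...,mu) = sum_j p_j phi_j^sharp(mu x ... x mu); indices j < L.\<close>
definition MS_bar :: "nat \<Rightarrow> (nat \<Rightarrow> ('m::finite \<Rightarrow> 'a::metric_space) \<Rightarrow> 'a) \<Rightarrow> (nat \<Rightarrow> real)
     \<Rightarrow> 'a measure \<Rightarrow> 'a measure" where
  "MS_bar L \<phi> p \<mu> = measure_of UNIV (sets borel)
     (\<lambda>B. \<Sum>j<L. ennreal (p j) * emeasure (prodM \<mu> :: ('m \<Rightarrow> 'a) measure)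
                                   ((\<phi> j) -` B \<inter> space (prodM \<mu> :: ('m \<Rightarrow> 'a) measure)))"

definition dMK :: "'a::metric_space measure \<Rightarrow> 'a measure \<Rightarrow> real" where
  "dMK \<mu> \<nu> = (SUP f\<in>{f :: 'a \<Rightarrow> real. lipschitz_on 1 UNIV f}.
                 \<bar>integral\<^sup>L \<mu> f - integral\<^sup>L \<nu> f\<bar>)"

end

theory Submission
  imports Defs
begin


lemma compact_countable_dense:
  fixes K :: "'a::metric_space set"
  assumes "compact K"
  obtains D where "countable D" "\<And>x e. x \<in> K \<Longrightarrow> e > 0 \<Longrightarrow> \<exists>d\<in>D. dist x d < e"
proof -
  have "\<forall>n::nat. \<exists>k. finite k \<and> k \<subseteq> K \<and> K \<subseteq> (\<Union>x\<in>k. ball x (1 / (Suc n)))"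
    using seq_compact_imp_totally_bounded[OF compact_imp_seq_compact[OF assms]] by simp
  then obtain k where k: "\<And>n. finite (k n)" "\<And>n. K \<subseteq> (\<Union>x\<in>k n. ball x (1 / (Suc n)))"
    by metis
  show ?thesis
  proof (rule that[of "\<Union>n. k n"])
    show "countable (\<Union>n. k n)" using k(1) by (simp add: countable_finite)
    fix x e assume x: "x \<in> K" and e: "(e::real) > 0"
    obtain n where n: "1 / Suc n < e" using e by (meson nat_approx_posE)
    from k(2)[of n] x obtain d where "d \<in> k n" "x \<in> ball d (1 / Suc n)" by auto
    then have "d \<in> (\<Union>n. k n)" "dist x d < e" using n by (auto simp: dist_commute)
    then show "\<exists>d\<in>\<Union>n. k n. dist x d < e" by blast
  qed
qed

lemma meas_cont:
  fixes \<phi> :: "('m \<Rightarrow> 'a::metric_space) \<Rightarrow> 'b::topological_space"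
  assumes cont: "continuous_on UNIV \<phi>" and fI: "finite I" and K: "\<And>i. i \<in> I \<Longrightarrow> compact (K i)"
    and M: "\<And>i. i \<in> I \<Longrightarrow> sets (M i) = sets (restrict_space borel (K i))"
  shows "\<phi> \<in> borel_measurable (PiM I M)"
proof (rule borel_measurableI)
  fix S :: "'b set" assume S: "open S"
  have spM: "space (M i) = K i" if "i \<in> I" for i
    using sets_eq_imp_space_eq[OF M[OF that]] by (simp add: space_restrict_space)
  have sp: "space (PiM I M) = PiE I K"
    by (simp add: space_PiM spM cong: PiE_cong)
  have cK: "compact (\<Union>i\<in>I. K i)" using K fI by (intro compact_UN) auto
  obtain D where D: "countable D" "\<And>x e. x \<in> (\<Union>i\<in>I. K i) \<Longrightarrow> e > 0 \<Longrightarrow> \<exists>d\<in>D. dist x d < e"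
    using compact_countable_dense[OF cK] by blast
  define V where "V = \<phi> -` S \<inter> PiE I K"
  define box where "box = (\<lambda>(d::'m \<Rightarrow> 'a, r::real). PiE I (\<lambda>i. ball (d i) r \<inter> K i))"
  define C where "C = box ` {(d, r). d \<in> PiE I (\<lambda>_. D) \<and> r \<in> \<rat> \<and> box (d, r) \<subseteq> V}"
  have "countable C"
  proof -
    have "countable (PiE I (\<lambda>_::'m. D) \<times> \<rat>)"
      using D(1) fI by (intro countable_SIGMA countable_PiE countable_rat) auto
    then have "countable {(d, r). d \<in> PiE I (\<lambda>_. D) \<and> r \<in> \<rat> \<and> box (d, r) \<subseteq> V}"
      by (rule countable_subset[rotated]) auto
    then show ?thesis unfolding C_def by simp
  qed
  have Csets: "C \<subseteq> sets (PiM I M)"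
  proof
    fix c assume "c \<in> C"
    then obtain d r where c: "c = PiE I (\<lambda>i. ball (d i) r \<inter> K i)"
      unfolding C_def box_def by auto
    have "ball (d i) r \<inter> K i \<in> sets (M i)" if i: "i \<in> I" for i
    proof -
      have "K i \<in> sets borel" using K[OF i] by (simp add: borel_closed compact_imp_closed)
      then have "ball (d i) r \<inter> K i \<in> sets borel" by (intro sets.Int) auto
      then show ?thesis unfolding M[OF i]
        by (subst sets_restrict_space_iff) (auto simp: \<open>K i \<in> sets borel\<close>)
    qed
    then show "c \<in> sets (PiM I M)" unfolding c using fI by (intro sets_PiM_I_finite) auto
  qed
  have "V = \<Union>C"
  proof
    show "\<Union>C \<subseteq> V" unfolding C_def by auto
    show "V \<subseteq> \<Union>C"
    proof
      fix x assume xV: "x \<in> V"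
      have "open (\<phi> -` S)"
        using continuous_on_open_vimage[OF open_UNIV, of \<phi>] cont S by simp
      then obtain U where U: "\<forall>i. open (U i)" "x \<in> PiE UNIV U" "PiE UNIV U \<subseteq> \<phi> -` S"
        using xV unfolding V_def open_fun_def openin_product_topology_alt by (auto 0 0) (meson vimageI2)
      have "\<forall>i. \<exists>e>0. ball (x i) e \<subseteq> U i"
        using U(1,2) by (meson PiE_E UNIV_I open_contains_ball)
      then obtain e where e: "\<And>i. e i > 0" "\<And>i. ball (x i) (e i) \<subseteq> U i" by metis
      define e0 where "e0 = Min (insert 1 (e ` I))"
      have e0: "e0 > 0" "\<And>i. i \<in> I \<Longrightarrow> e0 \<le> e i" unfolding e0_def using e(1) fI by auto
      obtain r where r: "r \<in> \<rat>" "0 < r" "r < e0 / 2"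
        using e0 Rats_dense_in_real[of 0 "e0/2"] by auto
      have xK: "x i \<in> K i" if "i \<in> I" for i using xV that unfolding V_def by auto
      have xU: "x i = undefined" if "i \<notin> I" for i using xV that unfolding V_def by auto
      have "\<forall>i\<in>I. \<exists>di\<in>D. dist (x i) di < r" using D(2) xK r(2) by blast
      then obtain d' where d': "\<And>i. i \<in> I \<Longrightarrow> d' i \<in> D" "\<And>i. i \<in> I \<Longrightarrow> dist (x i) (d' i) < r"
        by metis
      define d where "d = restrict d' I"
      have sub: "box (d, r) \<subseteq> V"
      proof
        fix y assume y: "y \<in> box (d, r)"
        have "y i \<in> U i" for i
        proof (cases "i \<in> I")
          case True
          have "dist (d i) (y i) < r" "y i \<in> K i" using y True unfolding box_def by auto
          then have "dist (x i) (y i) < e i"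
            using d'(2)[OF True] e0(2)[OF True] r dist_triangle[of "x i" "y i" "d i"] True
            unfolding d_def by simp
          then show ?thesis using e(2)[of i] by auto
        next
          case False
          then have "y i = x i" using y xU unfolding box_def by auto
          then show ?thesis using U(2) by auto
        qed
        then have "y \<in> PiE UNIV U" by auto
        then show "y \<in> V" using U(3) y unfolding V_def box_def by auto
      qed
      have "x \<in> box (d, r)" unfolding box_def d_def using xK xU d'(2) xV
        by (auto simp: dist_commute V_def)
      moreover have "box (d, r) \<in> C" unfolding C_def d_def using d'(1) r(1) sub by (auto simp: d_def)
      ultimately show "x \<in> \<Union>C" by auto
    qed
  qed
  then show "\<phi> -` S \<inter> space (PiM I M) \<in> sets (PiM I M)"
    using sp V_def \<open>countable C\<close> Csets by (simp add: sets.countable_Union)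
qed



lemma nn_integral_mix:
  fixes N :: "'j \<Rightarrow> 'a measure" and c :: "'j \<Rightarrow> ennreal"
  assumes fin: "finite J" and sN: "\<And>j. j \<in> J \<Longrightarrow> sets (N j) = sets M"
    and emb: "\<And>A. A \<in> sets M \<Longrightarrow> emeasure M A = (\<Sum>j\<in>J. c j * emeasure (N j) A)"
    and g: "g \<in> borel_measurable M"
  shows "(\<integral>\<^sup>+x. g x \<partial>M) = (\<Sum>j\<in>J. c j * (\<integral>\<^sup>+x. g x \<partial>N j))"
  using g
proof (induction rule: borel_measurable_induct)
  case (cong f g)
  have "(\<integral>\<^sup>+x. f x \<partial>M) = (\<integral>\<^sup>+x. g x \<partial>M)" using cong(3) by (intro nn_integral_cong) auto
  moreover have "(\<integral>\<^sup>+x. f x \<partial>N j) = (\<integral>\<^sup>+x. g x \<partial>N j)" if "j \<in> J" for j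
    using cong(3) sets_eq_imp_space_eq[OF sN[OF that]] by (intro nn_integral_cong) auto
  ultimately show ?case using cong(4) by simp
next
  case (set A)
  then show ?case using emb[OF set] sN by (simp add: nn_integral_indicator)
next
  case (mult u c')
  have mj: "u \<in> borel_measurable (N j)" if "j \<in> J" for j
    using mult(2) by (simp add: measurable_cong_sets[OF sN[OF that] refl])
  have "(\<integral>\<^sup>+x. c' * u x \<partial>M) = c' * (\<integral>\<^sup>+x. u x \<partial>M)" using mult(2) by (rule nn_integral_cmult)
  also have "\<dots> = (\<Sum>j\<in>J. c j * (c' * (\<integral>\<^sup>+x. u x \<partial>N j)))"
    using mult(4) by (simp add: sum_distrib_left mult.left_commute)
  also have "\<dots> = (\<Sum>j\<in>J. c j * (\<integral>\<^sup>+x. c' * u x \<partial>N j))"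
    using mj by (intro sum.cong refl) (simp add: nn_integral_cmult)
  finally show ?case .
next
  case (add u v)
  have mj: "u \<in> borel_measurable (N j)" "v \<in> borel_measurable (N j)" if "j \<in> J" for j
    using add.hyps by (simp_all add: measurable_cong_sets[OF sN[OF that] refl])
  have "(\<integral>\<^sup>+x. v x + u x \<partial>M) = (\<integral>\<^sup>+x. v x \<partial>M) + (\<integral>\<^sup>+x. u x \<partial>M)"
    using add.hyps by (intro nn_integral_add) auto
  also have "\<dots> = (\<Sum>j\<in>J. c j * ((\<integral>\<^sup>+x. v x \<partial>N j) + (\<integral>\<^sup>+x. u x \<partial>N j)))"
    using add.IH by (simp add: sum.distrib distrib_left)
  also have "\<dots> = (\<Sum>j\<in>J. c j * (\<integral>\<^sup>+x. v x + u x \<partial>N j))"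
    using mj by (intro sum.cong refl) (simp add: nn_integral_add)
  finally show ?case .
next
  case (seq U)
  have mj: "U i \<in> borel_measurable (N j)" if "j \<in> J" for j i
    using seq.hyps by (simp add: measurable_cong_sets[OF sN[OF that] refl])
  have "(\<integral>\<^sup>+x. (SUP i. U i) x \<partial>M) = (\<integral>\<^sup>+x. (SUP i. U i x) \<partial>M)" by (simp add: SUP_apply image_comp)
  also have "\<dots> = (SUP i. (\<integral>\<^sup>+x. U i x \<partial>M))"
    using seq.hyps by (intro nn_integral_monotone_convergence_SUP) auto
  also have "\<dots> = (SUP i. (\<Sum>j\<in>J. c j * (\<integral>\<^sup>+x. U i x \<partial>N j)))" using seq.IH by simp
  also have "\<dots> = (\<Sum>j\<in>J. (SUP i. c j * (\<integral>\<^sup>+x. U i x \<partial>N j)))"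
  proof (rule ennreal_SUP_sum)
    fix j assume "j \<in> J"
    show "incseq (\<lambda>i. c j * (\<integral>\<^sup>+x. U i x \<partial>N j))"
      using seq.hyps unfolding incseq_def
      by (auto intro!: mult_left_mono nn_integral_mono simp: le_fun_def)
  qed
  also have "\<dots> = (\<Sum>j\<in>J. c j * (SUP i. (\<integral>\<^sup>+x. U i x \<partial>N j)))"
    by (simp add: SUP_mult_left_ennreal)
  also have "\<dots> = (\<Sum>j\<in>J. c j * (\<integral>\<^sup>+x. (SUP i. U i) x \<partial>N j))"
  proof (intro sum.cong refl arg_cong2[where f="(*)"])
    fix j assume j: "j \<in> J"
    have "(\<integral>\<^sup>+x. (SUP i. U i) x \<partial>N j) = (\<integral>\<^sup>+x. (SUP i. U i x) \<partial>N j)" by (simp add: SUP_apply image_comp)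
    also have "\<dots> = (SUP i. (\<integral>\<^sup>+x. U i x \<partial>N j))"
      using seq.hyps mj[OF j] by (intro nn_integral_monotone_convergence_SUP) auto
    finally show "(SUP i. (\<integral>\<^sup>+x. U i x \<partial>N j)) = (\<integral>\<^sup>+x. (SUP i. U i) x \<partial>N j)" by simp
  qed
  finally show ?case .
qed

lemma integral_mix:
  fixes N :: "'j \<Rightarrow> 'a measure" and c :: "'j \<Rightarrow> real" and f :: "'a \<Rightarrow> real"
  assumes fin: "finite J" and sN: "\<And>j. j \<in> J \<Longrightarrow> sets (N j) = sets M"
    and cpos: "\<And>j. j \<in> J \<Longrightarrow> c j > 0"
    and emb: "\<And>A. A \<in> sets M \<Longrightarrow> emeasure M A = (\<Sum>j\<in>J. ennreal (c j) * emeasure (N j) A)"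
    and f: "integrable M f"
  shows "\<And>j. j \<in> J \<Longrightarrow> integrable (N j) f"
    and "integral\<^sup>L M f = (\<Sum>j\<in>J. c j * integral\<^sup>L (N j) f)"
proof -
  have fm: "f \<in> borel_measurable M" using f by simp
  have mj: "f \<in> borel_measurable (N j)" if "j \<in> J" for j
    using fm by (simp add: measurable_cong_sets[OF sN[OF that] refl])
  have P: "(\<integral>\<^sup>+x. ennreal (f x) \<partial>M) = (\<Sum>j\<in>J. ennreal (c j) * (\<integral>\<^sup>+x. ennreal (f x) \<partial>N j))"
    using fm by (intro nn_integral_mix[OF fin sN emb]) auto
  have Q: "(\<integral>\<^sup>+x. ennreal (- f x) \<partial>M) = (\<Sum>j\<in>J. ennreal (c j) * (\<integral>\<^sup>+x. ennreal (- f x) \<partial>N j))"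
    using fm by (intro nn_integral_mix[OF fin sN emb]) auto
  have Pf: "(\<integral>\<^sup>+x. ennreal (f x) \<partial>M) < top" "(\<integral>\<^sup>+x. ennreal (- f x) \<partial>M) < top"
    using f unfolding real_integrable_def by (auto simp: less_top)
  have fin_term: "X j < top"
    if S: "(\<Sum>j\<in>J. ennreal (c j) * X j) < top" and j: "j \<in> J" for X j
  proof -
    have "ennreal (c j) * X j \<le> (\<Sum>j\<in>J. ennreal (c j) * X j)"
      using j fin by (intro member_le_sum) auto
    then have "ennreal (c j) * X j < top" using S by (rule le_less_trans)
    then show ?thesis using cpos[OF j] by (auto simp add: ennreal_mult_less_top)
  qed
  have Pj: "(\<integral>\<^sup>+x. ennreal (f x) \<partial>N j) < top" "(\<integral>\<^sup>+x. ennreal (- f x) \<partial>N j) < top"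
    if "j \<in> J" for j
    using fin_term[OF Pf(1)[unfolded P] that] fin_term[OF Pf(2)[unfolded Q] that] by auto
  show ij: "integrable (N j) f" if "j \<in> J" for j
    unfolding real_integrable_def using mj[OF that] Pj[OF that] by auto
  have "integral\<^sup>L M f = enn2real (\<integral>\<^sup>+x. f x \<partial>M) - enn2real (\<integral>\<^sup>+x. ennreal (- f x) \<partial>M)"
    by (rule real_lebesgue_integral_def[OF f])
  also have "\<dots> = (\<Sum>j\<in>J. c j * enn2real (\<integral>\<^sup>+x. f x \<partial>N j)) - (\<Sum>j\<in>J. c j * enn2real (\<integral>\<^sup>+x. ennreal (- f x) \<partial>N j))"
    unfolding P Q using Pj cpos
    by (subst enn2real_sum, simp add: ennreal_mult_less_top, subst enn2real_sum,
        simp add: ennreal_mult_less_top) (simp add: enn2real_mult less_imp_le)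
  also have "\<dots> = (\<Sum>j\<in>J. c j * integral\<^sup>L (N j) f)"
    by (simp add: sum_subtractf[symmetric] right_diff_distrib real_lebesgue_integral_def[OF ij])
  finally show "integral\<^sup>L M f = (\<Sum>j\<in>J. c j * integral\<^sup>L (N j) f)" .
qed



lemma csupp: assumes "\<mu> \<in> Pc" shows "compact (csupp \<mu>)" "emeasure \<mu> (csupp \<mu>) = 1"
proof -
  have "\<exists>K. compact K \<and> emeasure \<mu> K = 1" using assms unfolding Pc_def by auto
  from someI_ex[OF this] show "compact (csupp \<mu>)" "emeasure \<mu> (csupp \<mu>) = 1"
    unfolding csupp_def by auto
qed

lemma PcD: assumes "\<mu> \<in> Pc" shows "sets \<mu> = sets borel" "prob_space \<mu>" "space \<mu> = UNIV"
  using assms unfolding Pc_def by (auto dest: sets_eq_imp_space_eq)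

lemma csupp_sets: assumes "\<mu> \<in> Pc" shows "csupp \<mu> \<in> sets \<mu>"
  using csupp[OF assms] PcD[OF assms] by (simp add: borel_closed compact_imp_closed)

lemma Mr_props:
  assumes "\<mu> \<in> Pc"
  shows "prob_space (restrict_space \<mu> (csupp \<mu>))"
    "sets (restrict_space \<mu> (csupp \<mu>)) = sets (restrict_space borel (csupp \<mu>))"
    "space (restrict_space \<mu> (csupp \<mu>)) = csupp \<mu>"
  using prob_space_restrict_space[OF csupp_sets[OF assms] csupp(2)[OF assms]]
    restrict_space_sets_cong[OF refl PcD(1)[OF assms]] PcD(3)[OF assms]
  by (auto simp: space_restrict_space)

lemma prodM_prob: assumes "\<mu> \<in> Pc" shows "prob_space (prodM \<mu> :: ('m::finite \<Rightarrow> 'a::metric_space) measure)"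
  unfolding prodM_def using Mr_props(1)[OF assms] by (intro prob_space_PiM) auto

lemma space_prodM: assumes "\<mu> \<in> Pc"
  shows "space (prodM \<mu> :: ('m::finite \<Rightarrow> 'a::metric_space) measure) = PiE UNIV (\<lambda>_. csupp \<mu>)"
  unfolding prodM_def using Mr_props(3)[OF assms] by (simp add: space_PiM)

lemma phi_meas:
  assumes "\<mu> \<in> Pc" "continuous_on UNIV \<phi>"
  shows "\<phi> \<in> borel_measurable (prodM \<mu> :: ('m::finite \<Rightarrow> 'a::metric_space) measure)"
  unfolding prodM_def using csupp(1)[OF assms(1)] Mr_props(2)[OF assms(1)]
  by (intro meas_cont[OF assms(2)]) auto

lemma MS_rep:
  fixes \<phi> :: "nat \<Rightarrow> ('m::finite \<Rightarrow> 'a::metric_space) \<Rightarrow> 'a"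
  assumes mu: "\<mu> \<in> Pc" and cont: "\<And>j. j < L \<Longrightarrow> continuous_on UNIV (\<phi> j)"
  shows "sets (MS_bar L \<phi> p \<mu>) = sets borel"
    and "\<And>A. A \<in> sets borel \<Longrightarrow> emeasure (MS_bar L \<phi> p \<mu>) A
           = (\<Sum>j<L. ennreal (p j) * emeasure (distr (prodM \<mu>) borel (\<phi> j)) A)"
proof -
  let ?F = "\<lambda>B. \<Sum>j<L. ennreal (p j) * emeasure (prodM \<mu> :: ('m \<Rightarrow> 'a) measure)
                                   ((\<phi> j) -` B \<inter> space (prodM \<mu> :: ('m \<Rightarrow> 'a) measure))"
  have meas: "\<phi> j \<in> borel_measurable (prodM \<mu>)" if "j < L" for j
    using phi_meas[OF mu cont[OF that]] .
  have Feq: "?F B = (\<Sum>j<L. ennreal (p j) * emeasure (distr (prodM \<mu>) borel (\<phi> j)) B)"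
    if "B \<in> sets borel" for B
    using meas that by (intro sum.cong refl) (simp add: emeasure_distr)
  have sa: "sigma_algebra UNIV (sets borel)"
    using sets.sigma_algebra_axioms[of borel] by simp
  show "sets (MS_bar L \<phi> p \<mu>) = sets borel"
    unfolding MS_bar_def using sets.sigma_sets_eq[of borel] by simp
  have pos: "positive (sets borel) ?F" unfolding positive_def by simp
  have ca: "countably_additive (sets borel) ?F"
    unfolding countably_additive_def
  proof (intro allI impI)
    fix A :: "nat \<Rightarrow> 'a set"
    assume A: "range A \<subseteq> sets borel" "disjoint_family A" "\<Union> (range A) \<in> sets borel"
    have "(\<Sum>i. ?F (A i)) = (\<Sum>i. \<Sum>j<L. ennreal (p j) * emeasure (distr (prodM \<mu>) borel (\<phi> j)) (A i))"
      using A(1) Feq by auto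
    also have "\<dots> = (\<Sum>j<L. \<Sum>i. ennreal (p j) * emeasure (distr (prodM \<mu>) borel (\<phi> j)) (A i))"
      by (rule suminf_sum) auto
    also have "\<dots> = (\<Sum>j<L. ennreal (p j) * (\<Sum>i. emeasure (distr (prodM \<mu>) borel (\<phi> j)) (A i)))"
      by (simp add: ennreal_suminf_cmult)
    also have "\<dots> = (\<Sum>j<L. ennreal (p j) * emeasure (distr (prodM \<mu>) borel (\<phi> j)) (\<Union>i. A i))"
      using A by (intro sum.cong refl arg_cong2[where f="(*)"] suminf_emeasure) auto
    also have "\<dots> = ?F (\<Union> (range A))" using Feq A(3) by simp
    finally show "(\<Sum>i. ?F (A i)) = ?F (\<Union> (range A))" .
  qed
  fix A :: "'a set" assume A: "A \<in> sets borel"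
  have "emeasure (MS_bar L \<phi> p \<mu>) A = ?F A"
    unfolding MS_bar_def by (rule emeasure_measure_of_sigma[OF sa pos ca A])
  then show "emeasure (MS_bar L \<phi> p \<mu>) A
           = (\<Sum>j<L. ennreal (p j) * emeasure (distr (prodM \<mu>) borel (\<phi> j)) A)"
    using Feq[OF A] by simp
qed



lemma MS_in_Pc:
  fixes \<phi> :: "nat \<Rightarrow> ('m::finite \<Rightarrow> 'a::metric_space) \<Rightarrow> 'a"
  assumes mu: "\<mu> \<in> Pc" and cont: "\<And>j. j < L \<Longrightarrow> continuous_on UNIV (\<phi> j)"
    and p_pos: "\<And>j. j < L \<Longrightarrow> p j > 0" and p_sum: "(\<Sum>j<L. p j) = 1"
  shows "MS_bar L \<phi> p \<mu> \<in> Pc"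
proof -
  let ?N = "MS_bar L \<phi> p \<mu>"
  let ?K = "csupp \<mu>"
  let ?K' = "\<Union>j<L. \<phi> j ` PiE UNIV (\<lambda>_::'m. ?K)"
  interpret P: prob_space "prodM \<mu> :: ('m \<Rightarrow> 'a) measure" using prodM_prob[OF mu] .
  have meas: "\<phi> j \<in> borel_measurable (prodM \<mu>)" if "j < L" for j
    using phi_meas[OF mu cont[OF that]] .
  have sN: "sets ?N = sets borel" using MS_rep(1)[OF mu cont] .
  have cPi: "compact (PiE UNIV (\<lambda>_::'m. ?K))"
  proof -
    have "compactin (product_topology (\<lambda>_::'m. euclidean) UNIV) (PiE UNIV (\<lambda>_. ?K))"
      using csupp(1)[OF mu] by (subst compactin_PiE) auto
    then show ?thesis by (simp add: euclidean_product_topology)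
  qed
  have cK': "compact ?K'"
    using cPi cont by (intro compact_UN compact_continuous_image continuous_on_subset[OF cont]) auto
  have K'b: "?K' \<in> sets borel" using cK' by (intro borel_closed compact_imp_closed)
  have sumL: "(\<Sum>j<L. ennreal (p j)) = 1"
    using p_pos p_sum by (subst sum_ennreal) (auto simp: less_imp_le)
  have "emeasure ?N UNIV = (\<Sum>j<L. ennreal (p j) * emeasure (distr (prodM \<mu>) borel (\<phi> j)) UNIV)"
    by (simp add: MS_rep(2)[OF mu cont])
  also have "\<dots> = (\<Sum>j<L. ennreal (p j))"
    using meas by (intro sum.cong refl) (simp add: emeasure_distr P.emeasure_space_1)
  finally have e1: "emeasure ?N UNIV = 1" using sumL by simp
  have "emeasure ?N ?K' = (\<Sum>j<L. ennreal (p j) * emeasure (distr (prodM \<mu>) borel (\<phi> j)) ?K')"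
    using K'b by (intro MS_rep(2)[OF mu cont])
  also have "\<dots> = (\<Sum>j<L. ennreal (p j))"
  proof (intro sum.cong refl)
    fix j assume j: "j \<in> {..<L}"
    have "\<phi> j -` ?K' \<inter> space (prodM \<mu>) = space (prodM \<mu>)"
      using j by (auto simp: space_prodM[OF mu])
    then show "ennreal (p j) * emeasure (distr (prodM \<mu>) borel (\<phi> j)) ?K' = ennreal (p j)"
      using meas j K'b by (subst emeasure_distr) (auto simp: P.emeasure_space_1)
  qed
  finally have e2: "emeasure ?N ?K' = 1" using sumL by simp
  have "space ?N = UNIV" using sets_eq_imp_space_eq[OF sN] by simp
  then have "prob_space ?N" using e1 by (intro prob_spaceI) simp
  then show ?thesis unfolding Pc_def using sN cK' e2 by auto
qed

lemma Pc_bound: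
  fixes \<nu> :: "'a::metric_space measure"
  assumes nu: "\<nu> \<in> Pc"
  shows "\<exists>R\<ge>0. \<forall>(f::'a \<Rightarrow> real) c. lipschitz_on c UNIV f \<longrightarrow> integrable \<nu> f \<and> \<bar>integral\<^sup>L \<nu> f - f z\<bar> \<le> c * R"
proof -
  interpret prob_space \<nu> using PcD(2)[OF nu] .
  obtain R where R: "\<forall>y\<in>csupp \<nu>. dist z y \<le> R"
    using compact_imp_bounded[OF csupp(1)[OF nu]] bounded_any_center by metis
  have AEK: "AE x in \<nu>. x \<in> csupp \<nu>"
    using csupp(2)[OF nu] by (intro AE_prob_1) (simp add: measure_def)
  show ?thesis
  proof (intro exI[of _ "max R 0"] conjI)
    show "max R 0 \<ge> 0" by simp
    show "\<forall>(f::'a \<Rightarrow> real) c. lipschitz_on c UNIV f \<longrightarrow> integrable \<nu> f \<and> \<bar>integral\<^sup>L \<nu> f - f z\<bar> \<le> c * max R 0"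
    proof (intro allI impI)
    fix f :: "'a \<Rightarrow> real" and c assume L: "lipschitz_on c UNIV f"
    have c0: "c \<ge> 0" using L by (simp add: lipschitz_on_def)
    have fm: "f \<in> borel_measurable \<nu>"
      using borel_measurable_continuous_onI[OF lipschitz_on_continuous_on[OF L]]
      by (simp add: measurable_cong_sets[OF PcD(1)[OF nu] refl])
    have AEb: "AE x in \<nu>. \<bar>f x - f z\<bar> \<le> c * max R 0"
      using AEK
    proof eventually_elim
      case (elim x)
      have "\<bar>f x - f z\<bar> \<le> c * dist x z" using L by (auto simp: lipschitz_on_def dist_real_def)
      also have "\<dots> \<le> c * max R 0" using R elim c0 by (intro mult_left_mono) (auto simp: dist_commute)
      finally show ?case .
    qed
    have int: "integrable \<nu> f"
    proof (rule integrable_const_bound[where B="\<bar>f z\<bar> + c * max R 0"])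
      show "AE x in \<nu>. norm (f x) \<le> \<bar>f z\<bar> + c * max R 0" using AEb by eventually_elim auto
    qed (rule fm)
    have "integral\<^sup>L \<nu> f \<le> f z + c * max R 0"
      using AEb by (intro integral_le_const[OF int]) (auto elim: AE_mp)
    moreover have "f z - c * max R 0 \<le> integral\<^sup>L \<nu> f"
      using AEb by (intro integral_ge_const[OF int]) (auto elim: AE_mp)
    ultimately show "integrable \<nu> f \<and> \<bar>integral\<^sup>L \<nu> f - f z\<bar> \<le> c * max R 0" using int by auto
    qed
  qed
qed

lemma dMK_bdd:
  assumes mu: "\<mu> \<in> Pc" and nu: "\<nu> \<in> Pc"
  shows "bdd_above ((\<lambda>f. \<bar>integral\<^sup>L \<mu> f - integral\<^sup>L \<nu> f\<bar>) ` {f :: 'a::metric_space \<Rightarrow> real. lipschitz_on 1 UNIV f})"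
proof -
  obtain R1 where R1: "\<forall>(f::'a \<Rightarrow> real) c. lipschitz_on c UNIV f \<longrightarrow> integrable \<mu> f \<and> \<bar>integral\<^sup>L \<mu> f - f undefined\<bar> \<le> c * R1"
    using Pc_bound[OF mu] by blast
  obtain R2 where R2: "\<forall>(f::'a \<Rightarrow> real) c. lipschitz_on c UNIV f \<longrightarrow> integrable \<nu> f \<and> \<bar>integral\<^sup>L \<nu> f - f undefined\<bar> \<le> c * R2"
    using Pc_bound[OF nu] by blast
  show ?thesis
  proof (rule bdd_aboveI2)
    fix f :: "'a \<Rightarrow> real" assume "f \<in> {f. lipschitz_on 1 UNIV f}"
    then have "\<bar>integral\<^sup>L \<mu> f - f undefined\<bar> \<le> R1" "\<bar>integral\<^sup>L \<nu> f - f undefined\<bar> \<le> R2"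
      using R1[rule_format, of 1 f] R2[rule_format, of 1 f] by auto
    then show "\<bar>integral\<^sup>L \<mu> f - integral\<^sup>L \<nu> f\<bar> \<le> R1 + R2" by linarith
  qed
qed

lemma dMK_upper:
  assumes mu: "\<mu> \<in> Pc" and nu: "\<nu> \<in> Pc" and L: "lipschitz_on 1 UNIV (f :: 'a::metric_space \<Rightarrow> real)"
  shows "\<bar>integral\<^sup>L \<mu> f - integral\<^sup>L \<nu> f\<bar> \<le> dMK \<mu> \<nu>"
  unfolding dMK_def using L by (intro cSUP_upper dMK_bdd[OF mu nu]) auto

lemma dMK_lip:
  assumes mu: "\<mu> \<in> Pc" and nu: "\<nu> \<in> Pc" and L: "lipschitz_on c UNIV (g :: 'a::metric_space \<Rightarrow> real)"
  shows "\<bar>integral\<^sup>L \<mu> g - integral\<^sup>L \<nu> g\<bar> \<le> c * dMK \<mu> \<nu>"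
proof (cases "c = 0")
  case True
  obtain R1 where R1: "\<forall>(f::'a \<Rightarrow> real) c. lipschitz_on c UNIV f \<longrightarrow> integrable \<mu> f \<and> \<bar>integral\<^sup>L \<mu> f - f undefined\<bar> \<le> c * R1"
    using Pc_bound[OF mu] by blast
  obtain R2 where R2: "\<forall>(f::'a \<Rightarrow> real) c. lipschitz_on c UNIV f \<longrightarrow> integrable \<nu> f \<and> \<bar>integral\<^sup>L \<nu> f - f undefined\<bar> \<le> c * R2"
    using Pc_bound[OF nu] by blast
  show ?thesis using R1[rule_format, OF L] R2[rule_format, OF L] True by simp
next
  case False
  then have c0: "c > 0" using L by (simp add: lipschitz_on_def)
  have L1: "lipschitz_on 1 UNIV (\<lambda>x. g x / c)"
    using L c0 unfolding lipschitz_on_def dist_real_def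
    by (auto simp: diff_divide_distrib[symmetric] field_simps)
  have "\<bar>integral\<^sup>L \<mu> (\<lambda>x. g x / c) - integral\<^sup>L \<nu> (\<lambda>x. g x / c)\<bar> \<le> dMK \<mu> \<nu>"
    by (rule dMK_upper[OF mu nu L1])
  then have "\<bar>integral\<^sup>L \<mu> g - integral\<^sup>L \<nu> g\<bar> / c \<le> dMK \<mu> \<nu>"
    using c0 by (simp add: diff_divide_distrib[symmetric])
  then show ?thesis using c0 by (simp add: field_simps)
qed



lemma cont_from_bound:
  fixes G :: "('m::finite \<Rightarrow> 'a::metric_space) \<Rightarrow> real"
  assumes b: "\<And>x y. \<bar>G x - G y\<bar> \<le> (\<Sum>k\<in>UNIV. a k * dist (x k) (y k))"
  shows "continuous_on UNIV G"
  unfolding continuous_on_def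
proof (intro ballI)
  fix x :: "'m \<Rightarrow> 'a"
  let ?g = "\<lambda>y. (\<Sum>k\<in>UNIV. a k * dist (y k) (x k))"
  have "continuous_on UNIV ?g"
    by (intro continuous_intros continuous_on_product_then_coordinatewise continuous_on_id)
  then have "(?g \<longlongrightarrow> ?g x) (at x within UNIV)"
    unfolding continuous_on_def by (rule bspec) simp
  then have g0: "(?g \<longlongrightarrow> 0) (at x within UNIV)" by simp
  have "((\<lambda>y. G y - G x) \<longlongrightarrow> 0) (at x within UNIV)"
    by (rule Lim_null_comparison[OF _ g0]) (use b in auto)
  then show "(G \<longlongrightarrow> G x) (at x within UNIV)" by (rule LIM_zero_cancel)
qed

lemma F_bound:
  fixes F :: "('m::finite \<Rightarrow> 'a::metric_space) \<Rightarrow> real"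
  assumes b: "\<And>x y. \<bar>F x - F y\<bar> \<le> (\<Sum>k\<in>UNIV. a k * dist (x k) (y k))"
    and a: "\<And>k. a k \<ge> 0" and T: "bounded T"
  shows "\<exists>B. \<forall>x. (\<forall>k. x k \<in> T) \<longrightarrow> \<bar>F x\<bar> \<le> B"
proof -
  obtain R where R: "\<forall>y\<in>T. dist undefined y \<le> R" using T bounded_any_center by metis
  show ?thesis
  proof (intro exI allI impI)
    fix x :: "'m \<Rightarrow> 'a" assume x: "\<forall>k. x k \<in> T"
    have "\<bar>F x - F (\<lambda>_. undefined)\<bar> \<le> (\<Sum>k\<in>UNIV. a k * dist (x k) undefined)" by (rule b)
    also have "\<dots> \<le> (\<Sum>k\<in>UNIV. a k * R)"
      using x R a by (intro sum_mono mult_left_mono) (auto simp: dist_commute)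
    finally show "\<bar>F x\<bar> \<le> \<bar>F (\<lambda>_. undefined)\<bar> + (\<Sum>k\<in>UNIV. a k * R)" by linarith
  qed
qed

lemma restrict_int:
  assumes rho: "\<rho> \<in> Pc" and g: "g \<in> borel_measurable borel"
  shows "integral\<^sup>L (restrict_space \<rho> (csupp \<rho>)) g = integral\<^sup>L \<rho> (g :: 'a::metric_space \<Rightarrow> real)"
proof -
  interpret prob_space \<rho> using PcD(2)[OF rho] .
  have AEK: "AE x in \<rho>. x \<in> csupp \<rho>"
    using csupp(2)[OF rho] by (intro AE_prob_1) (simp add: measure_def)
  have "integral\<^sup>L (restrict_space \<rho> (csupp \<rho>)) g = integral\<^sup>L \<rho> (\<lambda>x. indicator (csupp \<rho>) x *\<^sub>R g x)"
    using csupp_sets[OF rho] PcD(3)[OF rho] by (intro integral_restrict_space) auto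
  also have "\<dots> = integral\<^sup>L \<rho> g"
  proof (rule integral_cong_AE)
    have Kb: "csupp \<rho> \<in> sets \<rho>" by (rule csupp_sets[OF rho])
    have g': "g \<in> borel_measurable \<rho>" using g by (simp add: measurable_cong_sets[OF PcD(1)[OF rho] refl])
    show "(\<lambda>x. indicator (csupp \<rho>) x *\<^sub>R g x) \<in> borel_measurable \<rho>"
      by (rule borel_measurable_scaleR[OF borel_measurable_indicator[OF Kb] g'])
    show "g \<in> borel_measurable \<rho>" by (rule g')
    show "AE x in \<rho>. indicator (csupp \<rho>) x *\<^sub>R g x = g x" using AEK by eventually_elim simp
  qed
  finally show ?thesis .
qed



lemma lip_upd:
  fixes F :: "('m::finite \<Rightarrow> 'a::metric_space) \<Rightarrow> real"
  assumes b: "\<And>x y. \<bar>F x - F y\<bar> \<le> (\<Sum>k\<in>UNIV. a k * dist (x k) (y k))"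
    and a: "\<And>k. a k \<ge> 0"
  shows "lipschitz_on (a i) UNIV (\<lambda>y. F (x(i:=y)))"
  unfolding lipschitz_on_def
proof (intro conjI ballI)
  show "0 \<le> a i" by (rule a)
  fix y y' :: 'a
  have "dist (F (x(i:=y))) (F (x(i:=y'))) \<le> (\<Sum>k\<in>UNIV. a k * dist ((x(i:=y)) k) ((x(i:=y')) k))"
    using b[of "x(i:=y)" "x(i:=y')"] by (simp only: dist_real_def)
  also have "\<dots> = (\<Sum>k\<in>UNIV. if k = i then a i * dist y y' else 0)"
    by (intro sum.cong refl) auto
  also have "\<dots> = a i * dist y y'" by simp
  finally show "dist (F (x(i:=y))) (F (x(i:=y'))) \<le> a i * dist y y'" .
qed

lemma upd_bound:
  fixes F :: "('m::finite \<Rightarrow> 'a::metric_space) \<Rightarrow> real"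
  assumes b: "\<And>x y. \<bar>F x - F y\<bar> \<le> (\<Sum>k\<in>UNIV. a k * dist (x k) (y k))"
    and a: "\<And>k. a k \<ge> 0"
  shows "\<bar>F (x(i:=y)) - F (x'(i:=y))\<bar> \<le> (\<Sum>k\<in>UNIV. a k * dist (x k) (x' k))"
proof -
  have "\<bar>F (x(i:=y)) - F (x'(i:=y))\<bar> \<le> (\<Sum>k\<in>UNIV. a k * dist ((x(i:=y)) k) ((x'(i:=y)) k))"
    by (rule b)
  also have "\<dots> \<le> (\<Sum>k\<in>UNIV. a k * dist (x k) (x' k))"
    using a by (intro sum_mono) auto
  finally show ?thesis .
qed

lemma tele:
  fixes F :: "('m::finite \<Rightarrow> 'a::metric_space) \<Rightarrow> real" and a :: "'m \<Rightarrow> real"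
  assumes mu: "\<mu> \<in> Pc" and nu: "\<nu> \<in> Pc" and a: "\<And>k. a k \<ge> 0"
    and b: "\<And>x y. \<bar>F x - F y\<bar> \<le> (\<Sum>k\<in>UNIV. a k * dist (x k) (y k))"
  shows "\<bar>integral\<^sup>L (prodM \<mu>) F - integral\<^sup>L (prodM \<nu>) F\<bar> \<le> (\<Sum>k\<in>UNIV. a k) * dMK \<mu> \<nu>"
proof -
  define Mm where "Mm = restrict_space \<mu> (csupp \<mu>)"
  define Mn where "Mn = restrict_space \<nu> (csupp \<nu>)"
  define MS :: "'m set \<Rightarrow> 'm \<Rightarrow> 'a measure" where "MS = (\<lambda>S k. if k \<in> S then Mn else Mm)"
  define KS :: "'m set \<Rightarrow> 'm \<Rightarrow> 'a set" where "KS = (\<lambda>S k. if k \<in> S then csupp \<nu> else csupp \<mu>)"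
  have MS_prob: "prob_space (MS S k)" for S k
    unfolding MS_def Mm_def Mn_def using Mr_props(1)[OF mu] Mr_props(1)[OF nu] by auto
  have MS_sets: "sets (MS S k) = sets (restrict_space borel (KS S k))" for S k
    unfolding MS_def KS_def Mm_def Mn_def using Mr_props(2)[OF mu] Mr_props(2)[OF nu] by auto
  have MS_space: "space (MS S k) = KS S k" for S k
    unfolding MS_def KS_def Mm_def Mn_def using Mr_props(3)[OF mu] Mr_props(3)[OF nu] by auto
  have KS_comp: "compact (KS S k)" for S k
    unfolding KS_def using csupp(1)[OF mu] csupp(1)[OF nu] by auto
  have measI: "G \<in> borel_measurable (PiM I (MS S))"
    if "continuous_on UNIV G" for G :: "('m \<Rightarrow> 'a) \<Rightarrow> real" and I S
    by (rule meas_cont[OF that]) (auto simp: KS_comp MS_sets)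
  have PiM_prob: "prob_space (PiM I (MS S))" for I S
    using MS_prob by (intro prob_space_PiM) auto
  have space_P: "space (PiM I (MS S)) = PiE I (KS S)" for I S
    by (simp add: space_PiM MS_space)
  define z :: 'a where "z = undefined"
  define T where "T = csupp \<mu> \<union> csupp \<nu> \<union> {z}"
  have KS_T: "KS S k \<subseteq> T" for S k unfolding KS_def T_def by auto
  have "bounded T" unfolding T_def
    using compact_imp_bounded[OF csupp(1)[OF mu]] compact_imp_bounded[OF csupp(1)[OF nu]] by auto
  then obtain B where B: "\<And>x. (\<forall>k. x k \<in> T) \<Longrightarrow> \<bar>F x\<bar> \<le> B"
    using F_bound[OF b a] by blast
  have Fc: "continuous_on UNIV F" by (rule cont_from_bound[OF b])
  have intF: "integrable (PiM UNIV (MS S)) F" for S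
  proof -
    interpret prob_space "PiM UNIV (MS S)" by (rule PiM_prob)
    show ?thesis
    proof (rule integrable_const_bound[where B=B])
      show "AE x in PiM UNIV (MS S). norm (F x) \<le> B"
        by (rule AE_I2) (use KS_T B in \<open>auto simp: space_P PiE_iff intro!: B; blast\<close>)
      show "F \<in> borel_measurable (PiM UNIV (MS S))" by (rule measI[OF Fc])
    qed
  qed
  obtain Rm where Rm: "\<forall>(f::'a \<Rightarrow> real) c. lipschitz_on c UNIV f \<longrightarrow> integrable \<mu> f \<and> \<bar>integral\<^sup>L \<mu> f - f z\<bar> \<le> c * Rm"
    using Pc_bound[OF mu] by blast
  obtain Rn where Rn: "\<forall>(f::'a \<Rightarrow> real) c. lipschitz_on c UNIV f \<longrightarrow> integrable \<nu> f \<and> \<bar>integral\<^sup>L \<nu> f - f z\<bar> \<le> c * Rn"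
    using Pc_bound[OF nu] by blast
  have step: "\<bar>integral\<^sup>L (PiM UNIV (MS S)) F - integral\<^sup>L (PiM UNIV (MS (insert i S))) F\<bar> \<le> a i * dMK \<mu> \<nu>"
    if iS: "i \<notin> S" for i S
  proof -
    define I where "I = UNIV - {i}"
    have UI: "insert i I = UNIV" and iI: "i \<notin> I" and fI: "finite I" unfolding I_def by auto
    define Q where "Q = PiM I (MS S)"
    have QQ: "PiM I (MS (insert i S)) = Q" unfolding Q_def
      by (intro PiM_cong refl) (auto simp: MS_def I_def)
    have psf: "product_sigma_finite (MS S')" for S'
      unfolding product_sigma_finite_def using MS_prob by (auto intro: prob_space_imp_sigma_finite)
    have g_lip: "lipschitz_on (a i) UNIV (\<lambda>y. F (x(i:=y)))" for x by (rule lip_upd[OF b a])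
    have g_meas: "(\<lambda>y. F (x(i:=y))) \<in> borel_measurable borel" for x
      by (rule borel_measurable_continuous_onI[OF lipschitz_on_continuous_on[OF g_lip]])
    define Gm where "Gm = (\<lambda>x. integral\<^sup>L \<mu> (\<lambda>y. F (x(i:=y))))"
    define Gn where "Gn = (\<lambda>x. integral\<^sup>L \<nu> (\<lambda>y. F (x(i:=y))))"
    have e1: "integral\<^sup>L (PiM UNIV (MS S)) F = integral\<^sup>L Q Gm"
    proof -
      have "integral\<^sup>L (PiM UNIV (MS S)) F = integral\<^sup>L (PiM (insert i I) (MS S)) F" using UI by simp
      also have "\<dots> = (\<integral>x. (\<integral>y. F (x(i:=y)) \<partial>MS S i) \<partial>PiM I (MS S))"
        using intF[of S] UI by (intro product_sigma_finite.product_integral_insert[OF psf fI iI]) simp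
      also have "\<dots> = integral\<^sup>L Q Gm"
      proof -
        have h: "MS S i = restrict_space \<mu> (csupp \<mu>)" using iS by (simp add: MS_def Mm_def)
        show ?thesis unfolding Q_def Gm_def h
          by (intro Bochner_Integration.integral_cong refl restrict_int[OF mu g_meas])
      qed
      finally show ?thesis .
    qed
    have e2: "integral\<^sup>L (PiM UNIV (MS (insert i S))) F = integral\<^sup>L Q Gn"
    proof -
      have "integral\<^sup>L (PiM UNIV (MS (insert i S))) F = integral\<^sup>L (PiM (insert i I) (MS (insert i S))) F" using UI by simp
      also have "\<dots> = (\<integral>x. (\<integral>y. F (x(i:=y)) \<partial>MS (insert i S) i) \<partial>PiM I (MS (insert i S)))"
        using intF[of "insert i S"] UI by (intro product_sigma_finite.product_integral_insert[OF psf fI iI]) simp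
      also have "\<dots> = integral\<^sup>L Q Gn"
      proof -
        have h: "MS (insert i S) i = restrict_space \<nu> (csupp \<nu>)" by (simp add: MS_def Mn_def)
        show ?thesis unfolding QQ Gn_def h
          by (intro Bochner_Integration.integral_cong refl restrict_int[OF nu g_meas])
      qed
      finally show ?thesis .
    qed
    have G_lipb: "\<bar>integral\<^sup>L \<rho> (\<lambda>y. F (x(i:=y))) - integral\<^sup>L \<rho> (\<lambda>y. F (x'(i:=y)))\<bar> \<le> (\<Sum>k\<in>UNIV. a k * dist (x k) (x' k))"
      if rho: "\<rho> \<in> Pc" for \<rho> x x'
    proof -
      interpret prob_space \<rho> using PcD(2)[OF rho] .
      obtain R where R: "\<forall>(f::'a \<Rightarrow> real) c. lipschitz_on c UNIV f \<longrightarrow> integrable \<rho> f \<and> \<bar>integral\<^sup>L \<rho> f - f z\<bar> \<le> c * R"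
        using Pc_bound[OF rho] by blast
      have i1: "integrable \<rho> (\<lambda>y. F (x(i:=y)))" and i2: "integrable \<rho> (\<lambda>y. F (x'(i:=y)))"
        using R g_lip by blast+
      have d: "integral\<^sup>L \<rho> (\<lambda>y. F (x(i:=y))) - integral\<^sup>L \<rho> (\<lambda>y. F (x'(i:=y)))
             = integral\<^sup>L \<rho> (\<lambda>y. F (x(i:=y)) - F (x'(i:=y)))"
        using i1 i2 by simp
      let ?C = "(\<Sum>k\<in>UNIV. a k * dist (x k) (x' k))"
      have ub: "\<bar>F (x(i:=y)) - F (x'(i:=y))\<bar> \<le> ?C" for y by (rule upd_bound[OF b a])
      have "integral\<^sup>L \<rho> (\<lambda>y. F (x(i:=y)) - F (x'(i:=y))) \<le> ?C"
        using i1 i2 by (intro integral_le_const AE_I2) (auto simp: abs_le_iff intro: ub[THEN abs_le_D1])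
      moreover have "- ?C \<le> integral\<^sup>L \<rho> (\<lambda>y. F (x(i:=y)) - F (x'(i:=y)))"
      proof -
        have ub2: "- ?C \<le> F (x(i:=y)) - F (x'(i:=y))" for y using ub[of y] by linarith
        show ?thesis using i1 i2 by (intro integral_ge_const AE_I2) (simp_all add: ub2)
      qed
      ultimately show ?thesis unfolding d by linarith
    qed
    have Gbound: "\<bar>integral\<^sup>L \<rho> (\<lambda>y. F (x(i:=y)))\<bar> \<le> a i * R + B"
      if rho: "\<forall>(f::'a \<Rightarrow> real) c. lipschitz_on c UNIV f \<longrightarrow> integrable \<rho> f \<and> \<bar>integral\<^sup>L \<rho> f - f z\<bar> \<le> c * R"
        and x: "x \<in> space Q" for \<rho> R x
    proof -
      have "\<bar>integral\<^sup>L \<rho> (\<lambda>y. F (x(i:=y))) - F (x(i:=z))\<bar> \<le> a i * R" using rho g_lip by blast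
      moreover have "\<bar>F (x(i:=z))\<bar> \<le> B"
      proof (rule B, intro allI)
        fix k show "(x(i:=z)) k \<in> T"
        proof (cases "k = i")
          case False
          then have "x k \<in> KS S k" using x unfolding Q_def space_P I_def by (auto simp: PiE_iff)
          then show ?thesis using KS_T False by auto
        qed (simp add: T_def)
      qed
      ultimately show ?thesis by linarith
    qed
    have Gm_int: "integrable Q Gm"
    proof -
      interpret prob_space Q unfolding Q_def by (rule PiM_prob)
      show ?thesis
      proof (rule integrable_const_bound[where B="a i * Rm + B"])
        show "AE x in Q. norm (Gm x) \<le> a i * Rm + B"
          by (rule AE_I2) (use Gbound[OF Rm] in \<open>auto simp: Gm_def\<close>)
        show "Gm \<in> borel_measurable Q" unfolding Q_def
          by (intro measI cont_from_bound[where a=a]) (unfold Gm_def, rule G_lipb[OF mu])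
      qed
    qed
    have Gn_int: "integrable Q Gn"
    proof -
      interpret prob_space Q unfolding Q_def by (rule PiM_prob)
      show ?thesis
      proof (rule integrable_const_bound[where B="a i * Rn + B"])
        show "AE x in Q. norm (Gn x) \<le> a i * Rn + B"
          by (rule AE_I2) (use Gbound[OF Rn] in \<open>auto simp: Gn_def\<close>)
        show "Gn \<in> borel_measurable Q" unfolding Q_def
          by (intro measI cont_from_bound[where a=a]) (unfold Gn_def, rule G_lipb[OF nu])
      qed
    qed
    have pt: "\<bar>Gm x - Gn x\<bar> \<le> a i * dMK \<mu> \<nu>" for x
      unfolding Gm_def Gn_def by (rule dMK_lip[OF mu nu g_lip])
    interpret Qp: prob_space Q unfolding Q_def by (rule PiM_prob)
    have d: "integral\<^sup>L Q Gm - integral\<^sup>L Q Gn = integral\<^sup>L Q (\<lambda>x. Gm x - Gn x)"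
      using Gm_int Gn_int by simp
    have "integral\<^sup>L Q (\<lambda>x. Gm x - Gn x) \<le> a i * dMK \<mu> \<nu>"
      using pt Gm_int Gn_int by (intro Qp.integral_le_const) (auto simp: abs_le_iff)
    moreover have "- (a i * dMK \<mu> \<nu>) \<le> integral\<^sup>L Q (\<lambda>x. Gm x - Gn x)"
    proof -
      have pt2: "- (a i * dMK \<mu> \<nu>) \<le> Gm x - Gn x" for x using pt[of x] by linarith
      show ?thesis using Gm_int Gn_int by (intro Qp.integral_ge_const AE_I2) (simp_all add: pt2)
    qed
    ultimately show ?thesis unfolding e1 e2 d by linarith
  qed
  have ind: "\<bar>integral\<^sup>L (PiM UNIV (MS {})) F - integral\<^sup>L (PiM UNIV (MS S)) F\<bar> \<le> (\<Sum>k\<in>S. a k) * dMK \<mu> \<nu>"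
    if "finite S" for S
    using that
  proof (induction S rule: finite_induct)
    case empty then show ?case by simp
  next
    case (insert i S)
    have "\<bar>integral\<^sup>L (PiM UNIV (MS {})) F - integral\<^sup>L (PiM UNIV (MS (insert i S))) F\<bar>
        \<le> \<bar>integral\<^sup>L (PiM UNIV (MS {})) F - integral\<^sup>L (PiM UNIV (MS S)) F\<bar>
          + \<bar>integral\<^sup>L (PiM UNIV (MS S)) F - integral\<^sup>L (PiM UNIV (MS (insert i S))) F\<bar>" by linarith
    also have "\<dots> \<le> (\<Sum>k\<in>S. a k) * dMK \<mu> \<nu> + a i * dMK \<mu> \<nu>"
      using insert.IH step[OF insert.hyps(2)] by linarith
    also have "\<dots> = (\<Sum>k\<in>insert i S. a k) * dMK \<mu> \<nu>"
      using insert.hyps by (simp add: distrib_right)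
    finally show ?case .
  qed
  have "PiM UNIV (MS {}) = prodM \<mu>" unfolding prodM_def MS_def Mm_def by simp
  moreover have "PiM UNIV (MS UNIV) = prodM \<nu>" unfolding prodM_def MS_def Mn_def by simp
  ultimately show ?thesis using ind[of UNIV] by simp
qed



lemma MS_integral:
  fixes \<phi> :: "nat \<Rightarrow> ('m::finite \<Rightarrow> 'a::metric_space) \<Rightarrow> 'a" and f :: "'a \<Rightarrow> real"
  assumes mu: "\<mu> \<in> Pc" and cont: "\<And>j. j < L \<Longrightarrow> continuous_on UNIV (\<phi> j)"
    and p_pos: "\<And>j. j < L \<Longrightarrow> p j > 0" and p_sum: "(\<Sum>j<L. p j) = 1"
    and fL: "lipschitz_on 1 UNIV f"
  shows "integral\<^sup>L (MS_bar L \<phi> p \<mu>) f = (\<Sum>j<L. p j * integral\<^sup>L (prodM \<mu>) (\<lambda>x. f (\<phi> j x)))"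
proof -
  have MP: "MS_bar L \<phi> p \<mu> \<in> Pc" by (rule MS_in_Pc[OF mu cont p_pos p_sum])
  obtain R where R: "\<forall>(g::'a \<Rightarrow> real) c. lipschitz_on c UNIV g \<longrightarrow> integrable (MS_bar L \<phi> p \<mu>) g \<and> \<bar>integral\<^sup>L (MS_bar L \<phi> p \<mu>) g - g undefined\<bar> \<le> c * R"
    using Pc_bound[OF MP] by blast
  have fi: "integrable (MS_bar L \<phi> p \<mu>) f" using R fL by blast
  have fm: "f \<in> borel_measurable borel"
    by (rule borel_measurable_continuous_onI[OF lipschitz_on_continuous_on[OF fL]])
  have sN: "sets (MS_bar L \<phi> p \<mu>) = sets borel" by (rule MS_rep(1)[OF mu cont])
  have "integral\<^sup>L (MS_bar L \<phi> p \<mu>) f = (\<Sum>j<L. p j * integral\<^sup>L (distr (prodM \<mu>) borel (\<phi> j)) f)"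
  proof (rule integral_mix(2)[where M="MS_bar L \<phi> p \<mu>"])
    show "finite {..<L}" by simp
    show "\<And>j. j \<in> {..<L} \<Longrightarrow> sets (distr (prodM \<mu>) borel (\<phi> j)) = sets (MS_bar L \<phi> p \<mu>)"
      using sN by simp
    show "\<And>j. j \<in> {..<L} \<Longrightarrow> p j > 0" using p_pos by simp
    show "\<And>A. A \<in> sets (MS_bar L \<phi> p \<mu>) \<Longrightarrow> emeasure (MS_bar L \<phi> p \<mu>) A
            = (\<Sum>j\<in>{..<L}. ennreal (p j) * emeasure (distr (prodM \<mu>) borel (\<phi> j)) A)"
      using MS_rep(2)[OF mu cont] sN by simp
    show "integrable (MS_bar L \<phi> p \<mu>) f" by (rule fi)
  qed
  also have "\<dots> = (\<Sum>j<L. p j * integral\<^sup>L (prodM \<mu>) (\<lambda>x. f (\<phi> j x)))"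
    using phi_meas[OF mu cont] fm by (intro sum.cong refl) (simp add: integral_distr)
  finally show ?thesis .
qed


theorem mainTheorem2:
  fixes a :: "'m::finite \<Rightarrow> real"
    and L :: nat
    and \<phi> :: "nat \<Rightarrow> ('m \<Rightarrow> 'a::metric_space) \<Rightarrow> 'a"
    and p :: "nat \<Rightarrow> real"
  assumes a_nonneg: "\<And>i. a i \<ge> 0"
    and a_sum: "(\<Sum>i\<in>UNIV. a i) < 1"
    and phi_cont: "\<And>j. j < L \<Longrightarrow> continuous_on UNIV (\<phi> j)"
    and p_pos: "\<And>j. j < L \<Longrightarrow> p j > 0"
    and p_sum: "(\<Sum>j<L. p j) = 1"
    and phi_contr: "\<And>j. j < L \<Longrightarrow> is_contraction_m a (\<phi> j)"
  shows "(\<forall>\<mu>\<in>Pc. MS_bar L \<phi> p \<mu> \<in> Pc)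
       \<and> (\<forall>\<mu>\<in>Pc. \<forall>\<nu>\<in>Pc.
            dMK (MS_bar L \<phi> p \<mu>) (MS_bar L \<phi> p \<nu>) \<le> (\<Sum>i\<in>UNIV. a i) * dMK \<mu> \<nu>)
       \<and> (\<Sum>i\<in>UNIV. a i) < 1"
proof -
  let ?s = "\<Sum>i\<in>UNIV. a i"
  have P1: "\<forall>\<mu>\<in>Pc. MS_bar L \<phi> p \<mu> \<in> Pc"
  proof
    fix \<mu> :: "'a measure" assume "\<mu> \<in> Pc"
    then show "MS_bar L \<phi> p \<mu> \<in> Pc" by (rule MS_in_Pc[OF _ phi_cont p_pos p_sum])
  qed
  have P2: "\<forall>\<mu>\<in>Pc. \<forall>\<nu>\<in>Pc. dMK (MS_bar L \<phi> p \<mu>) (MS_bar L \<phi> p \<nu>) \<le> ?s * dMK \<mu> \<nu>"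
  proof (intro ballI)
    fix \<mu> \<nu> :: "'a measure" assume mu: "\<mu> \<in> Pc" and nu: "\<nu> \<in> Pc"
    show "dMK (MS_bar L \<phi> p \<mu>) (MS_bar L \<phi> p \<nu>) \<le> ?s * dMK \<mu> \<nu>"
      unfolding dMK_def[of "MS_bar L \<phi> p \<mu>"]
    proof (rule cSUP_least)
      have "lipschitz_on 1 UNIV (\<lambda>_::'a. 0::real)" by (simp add: lipschitz_on_def)
      then show "{f :: 'a \<Rightarrow> real. lipschitz_on 1 UNIV f} \<noteq> {}" by blast
      fix f :: "'a \<Rightarrow> real" assume "f \<in> {f. lipschitz_on 1 UNIV f}"
      then have fL: "lipschitz_on 1 UNIV f" by simp
      let ?D = "\<lambda>j. integral\<^sup>L (prodM \<mu>) (\<lambda>x. f (\<phi> j x)) - integral\<^sup>L (prodM \<nu>) (\<lambda>x. f (\<phi> j x))"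
      have eq: "integral\<^sup>L (MS_bar L \<phi> p \<mu>) f - integral\<^sup>L (MS_bar L \<phi> p \<nu>) f = (\<Sum>j<L. p j * ?D j)"
        using MS_integral[OF mu phi_cont p_pos p_sum fL] MS_integral[OF nu phi_cont p_pos p_sum fL]
        by (simp add: sum_subtractf right_diff_distrib)
      have Dj: "\<bar>?D j\<bar> \<le> ?s * dMK \<mu> \<nu>" if j: "j < L" for j
      proof (rule tele[OF mu nu a_nonneg])
        fix x y :: "'m \<Rightarrow> 'a"
        have "\<bar>f (\<phi> j x) - f (\<phi> j y)\<bar> \<le> dist (\<phi> j x) (\<phi> j y)"
          using fL by (simp add: lipschitz_on_def dist_real_def)
        also have "\<dots> \<le> (\<Sum>k\<in>UNIV. a k * dist (x k) (y k))"
          using phi_contr[OF j] by (simp add: is_contraction_m_def)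
        finally show "\<bar>f (\<phi> j x) - f (\<phi> j y)\<bar> \<le> (\<Sum>k\<in>UNIV. a k * dist (x k) (y k))" .
      qed
      have "\<bar>\<Sum>j<L. p j * ?D j\<bar> \<le> (\<Sum>j<L. \<bar>p j * ?D j\<bar>)" by (rule sum_abs)
      also have "\<dots> \<le> (\<Sum>j<L. p j * (?s * dMK \<mu> \<nu>))"
        using Dj p_pos by (intro sum_mono) (simp add: abs_mult less_imp_le mult_left_mono)
      also have "\<dots> = ?s * dMK \<mu> \<nu>" using p_sum by (simp add: sum_distrib_right[symmetric])
      finally show "\<bar>integral\<^sup>L (MS_bar L \<phi> p \<mu>) f - integral\<^sup>L (MS_bar L \<phi> p \<nu>) f\<bar> \<le> ?s * dMK \<mu> \<nu>"
        unfolding eq .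
    qed
  qed
  show ?thesis using P1 P2 a_sum by blast
qed

end
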